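(* Let $q=p^f$ with $p$ prime, $n\ge2$ and $(n,q)\notin\{(2,2),(2,3)\}$. Let $\beta$ be a basis of $V=\mathbb{F}_q^n$ and $\phi=\phi_\beta$. Let $H\le\Gamma\mathrm{L}_n(q)$ with $H\cap\mathrm{GL}_n(q)\le Z(\mathrm{GL}_n(q))$. Then there exists $b\in\mathrm{GL}_n(q)$ such that every element of $H^b$ has the form $\phi^i g$ for some $i\in\{1,\dots,f\}$ and some $g\in Z(\mathrm{GL}_n(q))$.
   Context: $\Gamma\mathrm{L}_n(q)$ is the group of invertible $\mathbb{F}_q$-semilinear transformations of $V$. For $\beta=\{v_1,\dots,v_n\}$, $\phi_\beta$ is the semilinear map $\sum_i\lambda_iv_i\mapsto\sum_i\lambda_i^p v_i$, so $\Gamma\mathrm{L}_n(q)=\mathrm{GL}_n(q)\rtimes\langle\phi_\beta\rangle$. $Z(\mathrm{GL}_n(q))$ is the group of scalar matrices; $H^b=b^{-1}Hb$. *)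

theory Defs
  imports "HOL-Computational_Algebra.Primes" "HOL-Library.Function_Algebras"
begin

text \<open>The vector space V = F_q^n is modelled as the functions 'n \<Rightarrow> 'a,
  where 'n is a finite index type with CARD('n) = n and 'a is a finite field.\<close>

definition smultv :: "'a::field \<Rightarrow> ('n \<Rightarrow> 'a) \<Rightarrow> ('n \<Rightarrow> 'a)" where
  "smultv c v = (\<lambda>i. c * v i)"

definition field_aut :: "('a::field \<Rightarrow> 'a) \<Rightarrow> bool" where
  "field_aut \<sigma> \<longleftrightarrow> bij \<sigma> \<and> (\<forall>x y. \<sigma> (x + y) = \<sigma> x + \<sigma> y) \<and> (\<forall>x y. \<sigma> (x * y) = \<sigma> x * \<sigma> y)"

definition GammaL :: "(('n::finite \<Rightarrow> 'a::field) \<Rightarrow> ('n \<Rightarrow> 'a)) set" where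
  "GammaL = {g. bij g \<and> (\<forall>u v. g (u + v) = g u + g v) \<and>
      (\<exists>\<sigma>. field_aut \<sigma> \<and> (\<forall>c v. g (smultv c v) = smultv (\<sigma> c) (g v)))}"

definition GL :: "(('n::finite \<Rightarrow> 'a::field) \<Rightarrow> ('n \<Rightarrow> 'a)) set" where
  "GL = {g. bij g \<and> (\<forall>u v. g (u + v) = g u + g v) \<and> (\<forall>c v. g (smultv c v) = smultv c (g v))}"

definition scalars :: "(('n::finite \<Rightarrow> 'a::field) \<Rightarrow> ('n \<Rightarrow> 'a)) set" where
  "scalars = {(\<lambda>v. smultv c v) | c. c \<noteq> 0}"

definition subgroup_GammaL :: "(('n::finite \<Rightarrow> 'a::field) \<Rightarrow> ('n \<Rightarrow> 'a)) set \<Rightarrow> bool" where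
  "subgroup_GammaL H \<longleftrightarrow> H \<subseteq> GammaL \<and> id \<in> H \<and>
     (\<forall>g\<in>H. \<forall>h\<in>H. g \<circ> h \<in> H) \<and> (\<forall>g\<in>H. inv g \<in> H)"

definition lincomb :: "('n::finite \<Rightarrow> 'n \<Rightarrow> 'a::field) \<Rightarrow> ('n \<Rightarrow> 'a) \<Rightarrow> ('n \<Rightarrow> 'a)" where
  "lincomb \<beta> l = (\<Sum>i\<in>UNIV. smultv (l i) (\<beta> i))"

definition is_basis :: "('n::finite \<Rightarrow> 'n \<Rightarrow> 'a::field) \<Rightarrow> bool" where
  "is_basis \<beta> \<longleftrightarrow> bij (lincomb \<beta>)"

definition phi_basis :: "nat \<Rightarrow> ('n::finite \<Rightarrow> 'n \<Rightarrow> 'a::field) \<Rightarrow> ('n \<Rightarrow> 'a) \<Rightarrow> ('n \<Rightarrow> 'a)" where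
  "phi_basis p \<beta> v = lincomb \<beta> (\<lambda>i. (inv (lincomb \<beta>) v i) ^ p)"

end

theory Submission
  imports Defs "HOL-Number_Theory.Residues" "HOL-Computational_Algebra.Polynomial"
begin

unbundle no m_inv_syntax

locale ff =
  fixes p f :: nat and ty :: "'a::field itself"
  assumes fin: "finite (UNIV::'a set)" and pr: "prime p" and f1: "f \<ge> 1"
    and card: "card (UNIV::'a set) = p^f"
begin

lemma CHAR_eq: "CHAR('a) = p"
proof -
  have "CHAR('a) dvd p^f" using CHAR_dvd_CARD[where 'a='a] card by simp
  moreover have pc: "prime CHAR('a)" using prime_CHAR_semidom finite_imp_CHAR_pos[OF fin] by blast
  ultimately have "CHAR('a) dvd p" using prime_dvd_power_nat by blast
  thus ?thesis using pc pr primes_dvd_imp_eq by blast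
qed

lemma frob_add: "((x::'a) + y)^(p^e) = x^(p^e) + y^(p^e)"
  by (rule freshmans_dream') (auto simp: CHAR_eq pr)

lemma frob_diff: "((x::'a) - y)^(p^e) = x^(p^e) - y^(p^e)"
  using frob_add[of "x-y" y e] by (simp add: algebra_simps)

lemma frob_sum: "(sum (g::_\<Rightarrow>'a) A)^(p^e) = sum (\<lambda>i. (g i)^(p^e)) A"
  by (rule freshmans_dream_sum') (auto simp: CHAR_eq pr)

lemma p_gt1: "p > 1" using pr prime_gt_1_nat by blast

lemma q_gt1: "card (UNIV::'a set) > 1"
proof -
  have "{0::'a,1} \<subseteq> UNIV" by simp
  hence "card {0::'a,1} \<le> card (UNIV::'a set)" using card_mono fin by blast
  thus ?thesis by simp
qed

lemma pow_card: "(x::'a) ^ card (UNIV :: 'a set) = x"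
proof (cases "x = 0")
  case False
  have "x * (\<Prod>y\<in>UNIV-{0}. x * y) = x * x ^ (card (UNIV :: 'a set) - 1) * \<Prod>(UNIV-{0})"
    using fin by (simp add: prod.distrib mult_ac)
  also have "x * x ^ (card (UNIV :: 'a set) - 1) = x ^ Suc (card (UNIV :: 'a set) - 1)"
    by (subst power_Suc) auto
  also have "Suc (card (UNIV :: 'a set) - 1) = card (UNIV :: 'a set)"
    using q_gt1 by simp
  also have "(\<Prod>y\<in>UNIV-{0}. x * y) = (\<Prod>y\<in>UNIV-{0}. y)"
    by (rule prod.reindex_bij_witness[of _ "\<lambda>y. y / x" "\<lambda>y. x * y"]) (use False in auto)
  finally show ?thesis
    using fin by simp
qed (use q_gt1 in auto)

lemma frob_f: "(x::'a) ^ (p^f) = x" using pow_card card by simp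

lemma frob_mult_f: "(x::'a) ^ (p^(f*t)) = x"
  by (induction t) (auto simp: power_add power_mult frob_f)

lemma frob_mod: "(x::'a) ^ (p^e) = x ^ (p^(e mod f))"
proof -
  have "e = f * (e div f) + e mod f" by simp
  hence "x ^ (p^e) = (x^(p^(f*(e div f))))^(p^(e mod f))"
    by (metis power_add power_mult)
  thus ?thesis by (simp add: frob_mult_f)
qed

lemma frob_surj: "\<exists>y. (y::'a)^(p^e) = x"
proof -
  have "(x^(p^(f*e - e)))^(p^e) = x^(p^(f*e))"
    using f1 by (simp add: power_mult[symmetric] power_add[symmetric] mult.commute)
  thus ?thesis using frob_mult_f by metis
qed

lemma frob_inj: "(x::'a)^(p^e) = y^(p^e) \<Longrightarrow> x = y"
  using frob_diff[of x y e] by (metis eq_iff_diff_eq_0 power_eq_0_iff)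

lemma roots_bound:
  fixes P :: "'a poly"
  assumes "P \<noteq> 0" "\<And>x. x \<in> S \<Longrightarrow> poly P x = 0"
  shows "card S \<le> degree P"
proof -
  have "S \<subseteq> {x. poly P x = 0}" using assms by auto
  hence "card S \<le> card {x. poly P x = 0}" using fin by (meson card_mono finite_subset subset_UNIV)
  thus ?thesis using card_poly_roots_bound[OF assms(1)] by linarith
qed

lemma frob_exp_inj:
  assumes "e < f" "e' < f" "\<And>x::'a. x^(p^e) = x^(p^e')"
  shows "e = e'"
proof (rule ccontr)
  assume ne: "e \<noteq> e'"
  { fix a b assume ab: "a < b" "b < f" "\<And>x::'a. x^(p^a) = x^(p^b)"
    define P :: "'a poly" where "P = monom 1 (p^b) - monom 1 (p^a)"
    have lt: "p^a < p^b" using ab p_gt1 by simp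
    have cf: "coeff P (p^b) = 1" using lt by (simp add: P_def coeff_monom)
    hence nz: "P \<noteq> 0" by auto
    have dg: "degree P \<le> p^b" unfolding P_def
      using lt by (intro degree_diff_le) (auto intro: order.trans[OF degree_monom_le])
    have "card (UNIV::'a set) \<le> degree P"
      by (rule roots_bound[OF nz]) (simp add: P_def poly_monom ab(3))
    moreover have "p^b < p^f" using ab p_gt1 by simp
    ultimately have False using dg card by simp }
  thus False using ne assms by (metis linorder_neqE_nat)
qed

definition Rg :: "'a ring" where
  "Rg = \<lparr>carrier = UNIV, monoid.mult = (\<lambda>x y. x * y), one = 1, ring.zero = 0, add = (\<lambda>x y. x + y)\<rparr>"

lemma Rg_field: "field Rg"
proof -
  have "\<exists>y. x + y = 0" for x :: 'a
    using add.right_inverse by blast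
  moreover have "x \<noteq> 0 \<Longrightarrow> \<exists>y. x * y = 1" for x :: 'a
    by (rule exI[of _ "inverse x"]) auto
  ultimately show ?thesis
    unfolding Rg_def using add.right_inverse
    by unfold_locales (auto simp:algebra_simps Units_def)
qed

lemma Rg_pow: "x [^]\<^bsub>Rg\<^esub> (n::nat) = x ^ n"
  by (induction n) (auto simp: Rg_def)

lemma generator: "\<exists>w::'a. w \<noteq> 0 \<and> (\<forall>x. x \<noteq> 0 \<longrightarrow> (\<exists>i. x = w^i))"
proof -
  have "finite (carrier Rg)" using fin by (simp add: Rg_def)
  note G = field.finite_field_mult_group_has_gen[OF Rg_field this]
  then obtain a where a: "a \<in> carrier (mult_of Rg)" and
     ca: "carrier (mult_of Rg) = {a [^]\<^bsub>Rg\<^esub> i | i::nat . i \<in> UNIV}"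
    by (elim bexE) 
  have cm: "carrier (mult_of Rg) = UNIV - {0}" by (simp add: Rg_def)
  have "UNIV - {0} = {a ^ i | i::nat . i \<in> UNIV}" using ca unfolding cm Rg_pow .
  moreover have "a \<noteq> 0" using a by (simp add: Rg_def)
  ultimately show ?thesis by blast
qed

lemma ord_gen:
  assumes w: "w \<noteq> 0" "\<forall>x. x \<noteq> 0 \<longrightarrow> (\<exists>i. x = w^i)" and d: "(w::'a)^d = 1"
  shows "(card (UNIV::'a set) - 1) dvd d"
proof -
  define Q where "Q = card (UNIV::'a set) - 1"
  have Qp: "Q > 0" using q_gt1 Q_def by simp
  have "card (UNIV::'a set) = Suc Q" using q_gt1 Q_def by simp
  hence "w * w^Q = w * 1" using pow_card[of w] by simp
  hence wQ: "w^Q = 1" using w(1) by simp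
  define u where "u = d mod Q"
  have "w^d = w^(Q * (d div Q) + u)" unfolding u_def by (simp only: mult_div_mod_eq)
  hence "w^d = (w^Q)^(d div Q) * w^u" by (simp add: power_add power_mult)
  hence wu: "w^u = 1" using wQ d by simp
  have "u = 0"
  proof (rule ccontr)
    assume "u \<noteq> 0"
    define P :: "'a poly" where "P = monom 1 u - 1"
    have cf: "coeff P u = 1" using \<open>u \<noteq> 0\<close> by (simp add: P_def coeff_monom)
    hence nz: "P \<noteq> 0" by auto
    have dg: "degree P \<le> u" unfolding P_def
      by (rule degree_diff_le) (auto simp: degree_monom_le)
    have "card (UNIV - {0::'a}) \<le> degree P"
    proof (rule roots_bound[OF nz])
      fix x :: 'a assume "x \<in> UNIV - {0}"
      then obtain i where "x = w^i" using w by auto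
      have "x^u = (w^u)^i" using \<open>x = w^i\<close> by (simp add: power_mult[symmetric] mult.commute)
      thus "poly P x = 0" by (simp add: P_def poly_monom wu)
    qed
    moreover have "card (UNIV - {0::'a}) = Q" using fin by (simp add: Q_def card_Diff_singleton)
    moreover have "u < Q" using Qp by (simp add: u_def)
    ultimately show False using dg by simp
  qed
  thus ?thesis unfolding u_def Q_def by (simp add: mod_0_imp_dvd)
qed

end

context ff
begin

lemma aut_basic:
  assumes "field_aut (\<sigma>::'a \<Rightarrow> 'a)"
  shows "\<sigma> 0 = 0" "\<sigma> 1 = 1" "\<And>x y. \<sigma> (x+y) = \<sigma> x + \<sigma> y" "\<And>x y. \<sigma> (x*y) = \<sigma> x * \<sigma> y"
    "\<And>k. \<sigma> (of_nat k) = of_nat k" "\<And>x i. \<sigma> (x^i) = (\<sigma> x)^i"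
proof -
  have add: "\<And>x y. \<sigma> (x+y) = \<sigma> x + \<sigma> y" and mul: "\<And>x y. \<sigma> (x*y) = \<sigma> x * \<sigma> y"
    and b: "bij \<sigma>" using assms by (auto simp: field_aut_def)
  show "\<And>x y. \<sigma> (x+y) = \<sigma> x + \<sigma> y" "\<And>x y. \<sigma> (x*y) = \<sigma> x * \<sigma> y" by (fact add mul)+
  have "\<sigma> 0 + \<sigma> 0 = \<sigma> 0 + 0" using add[of 0 0] by simp
  thus z: "\<sigma> 0 = 0" by (metis add_left_cancel)
  obtain y where "\<sigma> y = 1" using b by (metis bij_pointE)
  hence o: "\<sigma> 1 = 1" using mul[of 1 y] by simp
  thus "\<sigma> 1 = 1" .
  show "\<And>k. \<sigma> (of_nat k) = of_nat k"
  proof -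
    fix k show "\<sigma> (of_nat k) = of_nat k"
      by (induction k) (auto simp: z o add)
  qed
  show "\<And>x i. \<sigma> (x^i) = (\<sigma> x)^i"
  proof -
    fix x i show "\<sigma> (x^i) = (\<sigma> x)^i"
      by (induction i) (auto simp: o mul)
  qed
qed

lemma prime_field:
  assumes "(c::'a)^p = c"
  shows "\<exists>k. c = of_nat k"
proof -
  define S where "S = {c::'a. c^p = c}"
  define T where "T = (of_nat ` {..<p} :: 'a set)"
  have "(of_nat k :: 'a)^p = of_nat k" for k
  proof (induction k)
    case 0 then show ?case using p_gt1 by simp
  next
    case (Suc k)
    have "(of_nat k + 1 :: 'a)^(p^1) = (of_nat k)^(p^1) + 1^(p^1)" by (rule frob_add)
    hence "(of_nat k + 1 :: 'a)^p = (of_nat k)^p + 1" by (simp only: power_one_right power_one)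
    thus ?case using Suc by (metis of_nat_Suc add.commute)
  qed
  hence TS: "T \<subseteq> S" by (auto simp: T_def S_def)
  have "inj_on (of_nat :: nat \<Rightarrow> 'a) {..<p}"
  proof (rule inj_onI)
    fix i j assume "i \<in> {..<p}" "j \<in> {..<p}" "(of_nat i :: 'a) = of_nat j"
    hence "[i = j] (mod p)" "i < p" "j < p" using of_nat_eq_iff_cong_CHAR[where 'a='a] CHAR_eq by auto
    thus "i = j" by (simp add: cong_def)
  qed
  hence cT: "card T = p" by (simp add: T_def card_image)
  define P :: "'a poly" where "P = monom 1 p - monom 1 1"
  have cf: "coeff P p = 1" using p_gt1 by (simp add: P_def coeff_monom)
  hence nz: "P \<noteq> 0" by auto
  have dg: "degree P \<le> p" unfolding P_def using p_gt1
    by (intro degree_diff_le) (auto intro: order.trans[OF degree_monom_le])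
  have "card S \<le> degree P"
    by (rule roots_bound[OF nz]) (simp add: P_def poly_monom S_def)
  hence "card S \<le> card T" using dg cT by simp
  moreover have "finite S" using fin by (meson finite_subset subset_UNIV)
  ultimately have "T = S" using TS card_seteq by blast
  thus ?thesis using assms unfolding S_def T_def by auto
qed

lemma poly_hom:
  assumes "g 0 = 0" "\<And>x y. g (x + y) = g x + g y" "\<And>x y. g (x * y) = g x * g y"
  shows "poly (map_poly g P) (g x) = g (poly (P::'a poly) x)"
  by (induction P rule: pCons_induct) (auto simp: assms map_poly_pCons)

lemma aut_frob:
  assumes "field_aut (\<sigma>::'a \<Rightarrow> 'a)"
  shows "\<exists>k<f. \<forall>x. \<sigma> x = x^(p^k)"
proof -
  note sb = aut_basic[OF assms]
  obtain w :: 'a where w: "w \<noteq> 0" "\<forall>x. x \<noteq> 0 \<longrightarrow> (\<exists>i. x = w^i)" using generator by blast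
  define P :: "'a poly" where "P = (\<Prod>k<f. [:- (w^(p^k)), 1:])"
  have polyP: "poly P x = (\<Prod>k<f. x - w^(p^k))" for x by (simp add: P_def poly_prod)
  have degP: "degree P \<le> f" unfolding P_def
    by (rule order.trans[OF degree_prod_sum_le]) auto
  define g :: "'a \<Rightarrow> 'a" where "g x = x^(p^1)" for x
  have g0: "g 0 = 0" "\<And>x y. g (x + y) = g x + g y" "\<And>x y. g (x * y) = g x * g y"
    unfolding g_def using p_gt1 frob_add[where e=1] by (auto simp: power_mult_distrib)
  define P1 where "P1 = map_poly g P"
  have "poly P1 y = poly P y" for y
  proof -
    obtain x where x: "g x = y" using frob_surj unfolding g_def by blast
    have "poly P1 y = g (poly P x)" using poly_hom[OF g0] x P1_def by blast
    also have "\<dots> = (\<Prod>k<f. g x - g (w^(p^k)))"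
      unfolding polyP g_def using frob_diff[where e=1] by (simp add: power_mult_distrib prod_power_distrib)
    also have "\<dots> = (\<Prod>k<f. g x - w^(p^(Suc k)))"
      by (simp add: g_def power_mult[symmetric] mult.commute)
    also have "\<dots> = (\<Prod>k<f. g x - w^(p^k))"
    proof -
      obtain f' where f': "f = Suc f'" using f1 by (cases f) auto
      have "(\<Prod>k<f. g x - w^(p^(Suc k))) = (\<Prod>k<f'. g x - w^(p^(Suc k))) * (g x - w^(p^f))"
        unfolding f' by (simp add: prod.lessThan_Suc)
      also have "w^(p^f) = w^(p^0)" using frob_f by simp
      also have "(\<Prod>k<f'. g x - w^(p^(Suc k))) * (g x - w^(p^0)) = (\<Prod>k<f. g x - w^(p^k))"
        unfolding f' prod.lessThan_Suc_shift power_0 by (rule mult.commute)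
      finally show ?thesis .
    qed
    finally show ?thesis using x polyP by simp
  qed
  hence "P1 - P = 0"
  proof -
    assume allr: "\<And>y. poly P1 y = poly P y"
    show "P1 - P = 0"
    proof (rule ccontr)
      assume nz: "P1 - P \<noteq> 0"
      have "card (UNIV::'a set) \<le> degree (P1 - P)"
        by (rule roots_bound[OF nz]) (simp add: allr)
      moreover have "degree (P1 - P) \<le> f"
        unfolding P1_def using degP by (intro degree_diff_le) (auto intro: order.trans[OF map_poly_degree_leq])
      moreover have "f < p^f"
      proof -
        have "(2::nat)^f \<le> p^f" using p_gt1 by (intro power_mono) auto
        thus ?thesis using less_exp[of f] by linarith
      qed
      ultimately show False using card by simp
    qed
  qed
  hence "map_poly g P = P" by (simp add: P1_def)
  hence cfix: "(coeff P i)^p = coeff P i" for i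
    using arg_cong[of "map_poly g P" P "\<lambda>Q. coeff Q i"] coeff_map_poly[of g P i] g0(1) by (simp add: g_def)
  have sfix: "\<sigma> (coeff P i) = coeff P i" for i
    using prime_field[OF cfix[of i]] sb(5) by auto
  have "map_poly \<sigma> P = P" by (rule poly_eqI) (simp add: coeff_map_poly sb(1) sfix)
  hence "poly P (\<sigma> w) = \<sigma> (poly P w)" using poly_hom[of \<sigma> P w] sb by simp
  also have "poly P w = 0" unfolding polyP using f1 by (intro prod_zero) (auto intro!: bexI[of _ 0])
  finally have "(\<Prod>k<f. \<sigma> w - w^(p^k)) = 0" using sb(1) polyP by simp
  then obtain k where k: "k < f" "\<sigma> w = w^(p^k)" by auto
  have "\<forall>x. \<sigma> x = x^(p^k)"
  proof
    fix x show "\<sigma> x = x^(p^k)"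
    proof (cases "x = 0")
      case True thus ?thesis using sb(1) p_gt1 by simp
    next
      case False
      then obtain i where "x = w^i" using w by auto
      thus ?thesis using sb(6) k by (simp add: power_mult[symmetric] mult.commute)
    qed
  qed
  thus ?thesis using k by blast
qed

end


lemma sum_fun_apply: "(sum (F :: 'i \<Rightarrow> 'n \<Rightarrow> 'a::comm_monoid_add) A) j = sum (\<lambda>i. F i j) A"
  by (induction A rule: infinite_finite_induct) auto

lemma smultv_apply [simp]: "smultv c v i = c * v i"
  by (simp add: smultv_def)

interpretation V: vector_space "smultv :: 'a::field \<Rightarrow> ('n \<Rightarrow> 'a) \<Rightarrow> ('n \<Rightarrow> 'a)"
  by unfold_locales (auto simp: fun_eq_iff algebra_simps)

lemma smultv_comp: "smultv c (smultv d v) = smultv (c * d) v"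
  by (simp add: fun_eq_iff)

lemma smultv_one [simp]: "smultv 1 v = v" by (simp add: fun_eq_iff)
lemma smultv_zero_vec [simp]: "smultv c 0 = 0" by (simp add: fun_eq_iff)
lemma smultv_add: "smultv c (u + v) = smultv c u + smultv c v" by (simp add: fun_eq_iff algebra_simps)
lemma smultv_sum: "smultv c (sum F A) = sum (\<lambda>i. smultv c (F i)) A"
  by (simp add: fun_eq_iff sum_fun_apply sum_distrib_left)

lemma smultv_cancel:
  assumes "smultv x (u::'n \<Rightarrow> 'a::field) = smultv y u" "u \<noteq> 0"
  shows "x = y"
proof -
  have "\<exists>i. u i \<noteq> 0"
  proof (rule ccontr)
    assume "\<not> (\<exists>i. u i \<noteq> 0)"
    hence "u = 0" by (simp add: fun_eq_iff)
    thus False using assms(2) by simp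
  qed
  then obtain i where "u i \<noteq> 0" by blast
  moreover have "x * u i = y * u i" using assms(1) by (metis smultv_apply)
  ultimately show ?thesis by simp
qed

lemma smultv_inj: "c \<noteq> 0 \<Longrightarrow> smultv c u = smultv c v \<Longrightarrow> (u::'n \<Rightarrow> 'a::field) = v"
  by (simp add: fun_eq_iff)

lemma finite_V: "finite (UNIV :: 'a set) \<Longrightarrow> finite (UNIV :: ('n::finite \<Rightarrow> 'a) set)"
proof -
  assume "finite (UNIV :: 'a set)"
  hence "finite (PiE (UNIV::'n set) (\<lambda>_. UNIV :: 'a set))" by (intro finite_PiE) auto
  moreover have "PiE (UNIV::'n set) (\<lambda>_. UNIV :: 'a set) = UNIV" by (auto simp: PiE_def Pi_def extensional_def)
  ultimately show ?thesis by simp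
qed

lemma lincomb_add: "lincomb w (l + l') = lincomb w l + lincomb w l'"
  by (simp add: lincomb_def fun_eq_iff sum_fun_apply algebra_simps sum.distrib)

lemma lincomb_scale: "lincomb w (\<lambda>i. c * l i) = smultv c (lincomb w l)"
  by (simp add: lincomb_def fun_eq_iff sum_fun_apply algebra_simps sum_distrib_left)

lemma lincomb_zero: "lincomb w 0 = 0"
  by (simp add: lincomb_def fun_eq_iff sum_fun_apply)

lemma lincomb_unit: "lincomb w (\<lambda>j. if j = i then 1 else 0) = (w i :: 'n::finite \<Rightarrow> 'a::field)"
proof -
  have "lincomb w (\<lambda>j. if j = i then 1 else 0) = (\<Sum>j\<in>UNIV. if j = i then w j else 0)"
    unfolding lincomb_def by (intro sum.cong) (auto simp: fun_eq_iff)
  thus ?thesis by simp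
qed

lemma std_span: "(v::'n::finite \<Rightarrow> 'a::field) = lincomb (\<lambda>i j. if j = i then 1 else 0) v"
  by (simp add: lincomb_def fun_eq_iff sum_fun_apply if_distrib cong: if_cong)


context ff
begin

definition semi :: "nat \<Rightarrow> (('n::finite \<Rightarrow> 'a) \<Rightarrow> ('n \<Rightarrow> 'a)) \<Rightarrow> bool" where
  "semi e g \<longleftrightarrow> (\<forall>u v. g (u + v) = g u + g v) \<and> (\<forall>c v. g (smultv c v) = smultv (c^(p^e)) (g v))"

lemma semiD: "semi e g \<Longrightarrow> g (u + v) = g u + g v" "semi e g \<Longrightarrow> g (smultv c v) = smultv (c^(p^e)) (g v)"
  by (auto simp: semi_def)

lemma semi_zero: "semi e g \<Longrightarrow> g 0 = 0"
proof -
  assume "semi e g"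
  hence "g 0 + g 0 = g 0 + 0" using semiD(1)[of e g 0 0] by simp
  thus "g 0 = 0" by (metis add_left_cancel)
qed

lemma semi_sum: "semi e g \<Longrightarrow> g (sum F A) = sum (\<lambda>i. g (F i)) A"
  by (induction A rule: infinite_finite_induct) (auto simp: semi_zero semiD)

lemma semi_id: "semi 0 id" by (simp add: semi_def)

lemma semi_comp: "semi a g \<Longrightarrow> semi b h \<Longrightarrow> semi (a + b) (g \<circ> h)"
  by (auto simp: semi_def power_mult[symmetric] power_add mult.commute)

lemma semi_pow: "semi a g \<Longrightarrow> semi (a * t) (g ^^ t)"
proof (induction t)
  case 0 thus ?case using semi_id by (simp add: id_def)
next
  case (Suc t)
  have "semi (a + a * t) (g \<circ> g ^^ t)" by (rule semi_comp[OF Suc.prems Suc.IH[OF Suc.prems]])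
  thus ?case by (simp only: funpow.simps(2) mult_Suc_right)
qed

lemma semi_inv:
  assumes "semi a g" "bij g"
  shows "semi (f * a - a) (inv g)"
  unfolding semi_def
proof safe
  fix u v
  have 1: "g (inv g x) = x" for x using assms(2) by (simp add: bij_is_surj surj_f_inv_f)
  have "g (inv g u + inv g v) = g (inv g u) + g (inv g v)" by (rule semiD(1)[OF assms(1)])
  hence "g (inv g u + inv g v) = u + v" by (simp only: 1)
  thus "inv g (u + v) = inv g u + inv g v" by (rule inv_f_eq[OF bij_is_inj[OF assms(2)]])
next
  fix c :: 'a and v
  have e: "f*a - a + a = f*a" using f1 by (simp add: le_add_diff_inverse2)
  have "(c^(p^(f*a - a)))^(p^a) = c^(p^(f*a - a) * p^a)" by (simp only: power_mult[of c])
  also have "\<dots> = c^(p^(f*a - a + a))" by (simp only: power_add[of p])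
  also have "\<dots> = c^(p^(f*a))" by (simp only: e)
  also have "\<dots> = c" by (rule frob_mult_f)
  moreover have 1: "g (inv g x) = x" for x using assms(2) by (simp add: bij_is_surj surj_f_inv_f)
  moreover have "g (smultv (c^(p^(f*a - a))) (inv g v)) = smultv ((c^(p^(f*a - a)))^(p^a)) (g (inv g v))"
    by (rule semiD(2)[OF assms(1)])
  ultimately have "g (smultv (c^(p^(f*a - a))) (inv g v)) = smultv c v" by simp
  thus "inv g (smultv c v) = smultv (c ^ p ^ (f * a - a)) (inv g v)" by (rule inv_f_eq[OF bij_is_inj[OF assms(2)]])
qed

lemma semi_red: "semi a g \<Longrightarrow> a = f * x + r \<Longrightarrow> semi r g"
proof -
  assume "semi a g" "a = f * x + r"
  moreover have "(c::'a)^(p^(f*x + r)) = c^(p^r)" for c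
  proof -
    have "(c::'a)^(p^(f*x + r)) = (c^(p^(f*x)))^(p^r)" by (simp only: power_add[of p] power_mult[of c])
    thus ?thesis by (simp only: frob_mult_f)
  qed
  ultimately show ?thesis by (simp add: semi_def)
qed

lemma GL_iff: "g \<in> GL \<longleftrightarrow> bij g \<and> semi 0 g"
  by (simp add: GL_def semi_def)

lemma GammaL_semi: "g \<in> GammaL \<Longrightarrow> bij g \<and> (\<exists>e<f. semi e g)"
proof -
  assume "g \<in> GammaL"
  then obtain \<sigma> where "bij g" "\<forall>u v. g (u + v) = g u + g v" "field_aut \<sigma>"
     "\<forall>c v. g (smultv c v) = smultv (\<sigma> c) (g v)" by (auto simp: GammaL_def)
  moreover obtain k where "k < f" "\<forall>x. \<sigma> x = x^(p^k)" using aut_frob[OF \<open>field_aut \<sigma>\<close>] by blast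
  ultimately show ?thesis by (auto simp: semi_def)
qed

lemma bij_nonzero: "bij (g::('n::finite \<Rightarrow> 'a) \<Rightarrow> ('n \<Rightarrow> 'a)) \<Longrightarrow> \<exists>v. g v \<noteq> 0"
proof -
  assume "bij g"
  from surjD[OF bij_is_surj[OF this]] obtain v where "(\<lambda>_. 1) = g v" by blast
  moreover have ne: "(\<lambda>_. 1::'a) \<noteq> (0::'n \<Rightarrow> 'a)" by (simp add: fun_eq_iff)
  ultimately have "g v \<noteq> 0" by (subst (asm) eq_commute) simp
  thus ?thesis by blast
qed

lemma semi_unique:
  assumes "semi a g" "semi b g" "bij g" "a < f" "b < f"
  shows "a = b"
proof -
  obtain v where v: "g v \<noteq> 0" using bij_nonzero[OF assms(3)] by blast
  have H: "smultv (c^(p^a)) (g v) = smultv (c^(p^b)) (g v)" for c :: 'a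
  proof -
    have "smultv (c^(p^a)) (g v) = g (smultv c v)" by (rule semiD(2)[OF assms(1), symmetric])
    also have "\<dots> = smultv (c^(p^b)) (g v)" by (rule semiD(2)[OF assms(2)])
    finally show ?thesis .
  qed
  have "c^(p^a) = c^(p^b)" for c :: 'a by (rule smultv_cancel[OF H v])
  thus ?thesis by (rule frob_exp_inj[OF assms(4,5)])
qed

lemma semi_comm_scalar: "semi e g \<Longrightarrow> g \<circ> smultv c = smultv (c^(p^e)) \<circ> g"
  by (simp add: fun_eq_iff semiD)

lemma GL_inv: "(b::('n::finite \<Rightarrow> 'a) \<Rightarrow> _) \<in> GL \<Longrightarrow> inv b \<in> GL"
proof -
  assume "b \<in> GL"
  hence "bij b" "semi 0 b" by (auto simp: GL_iff)
  hence "semi (f * 0 - 0) (inv b)" using semi_inv by blast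
  thus ?thesis using \<open>bij b\<close> by (simp add: GL_iff bij_imp_bij_inv)
qed

lemma smultv_GL: "(c::'a) \<noteq> 0 \<Longrightarrow> (smultv c :: ('n::finite \<Rightarrow> 'a) \<Rightarrow> _) \<in> GL"
proof -
  assume c: "c \<noteq> 0"
  have "bij (smultv c :: ('n \<Rightarrow> 'a) \<Rightarrow> _)"
    by (rule bij_betwI[where g="smultv (inverse c)"]) (auto simp: smultv_comp c)
  thus ?thesis by (simp add: GL_def smultv_add smultv_comp mult.commute)
qed

end


lemma dedekind:
  fixes \<chi> :: "nat \<Rightarrow> 'a::field \<Rightarrow> 'a" and x :: "nat \<Rightarrow> ('n \<Rightarrow> 'a)"
  assumes mult: "\<And>k a b. \<chi> k (a*b) = \<chi> k a * \<chi> k b" and one: "\<And>k. \<chi> k 1 = 1"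
    and dist: "\<And>k l. k < m \<Longrightarrow> l < m \<Longrightarrow> k \<noteq> l \<Longrightarrow> \<exists>b. \<chi> k b \<noteq> \<chi> l b"
    and hyp: "\<And>a. (\<Sum>k<m. smultv (\<chi> k a) (x k)) \<in> V.span S"
  shows "\<forall>k<m. x k \<in> V.span S"
proof -
  have main: "\<And>x. card {k. k<m \<and> x k \<notin> V.span S} = N \<Longrightarrow>
      (\<And>a. (\<Sum>k<m. smultv (\<chi> k a) (x k)) \<in> V.span S) \<Longrightarrow> \<forall>k<m. x k \<in> V.span S" for N
  proof (induction N rule: less_induct)
    case (less N x)
    show ?case
    proof (rule ccontr)
      assume "\<not> (\<forall>k<m. x k \<in> V.span S)"
      then obtain k1 where k1: "k1 < m" "x k1 \<notin> V.span S" by blast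
      have others: "x k \<in> V.span S" if km: "k < m" and kk: "k \<noteq> k1" for k
      proof -
        obtain b where b: "\<chi> k b \<noteq> \<chi> k1 b" using dist[OF km k1(1) kk] by blast
        define y where "y j = smultv (\<chi> j b - \<chi> k1 b) (x j)" for j
        have sub: "{j. j<m \<and> y j \<notin> V.span S} \<subseteq> {j. j<m \<and> x j \<notin> V.span S} - {k1}"
        proof
          fix j assume j: "j \<in> {j. j<m \<and> y j \<notin> V.span S}"
          have "y k1 = 0" by (simp add: y_def fun_eq_iff)
          hence "j \<noteq> k1" using j V.span_zero[of S] by auto
          moreover have "x j \<notin> V.span S" using j V.span_scale by (auto simp: y_def)
          ultimately show "j \<in> {j. j<m \<and> x j \<notin> V.span S} - {k1}" using j by auto
        qed
        have fin: "finite {j. j<m \<and> x j \<notin> V.span S}" by simp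
        have "card ({j. j<m \<and> x j \<notin> V.span S} - {k1}) < card {j. j<m \<and> x j \<notin> V.span S}"
          using k1 fin by (intro card_Diff1_less) auto
        hence lt: "card {j. j<m \<and> y j \<notin> V.span S} < N"
          using card_mono[OF _ sub] fin less.prems(1) by (meson finite_Diff order_le_less_trans)
        have hy: "(\<Sum>j<m. smultv (\<chi> j a) (y j)) \<in> V.span S" for a
        proof -
          have eq: "(\<Sum>j<m. smultv (\<chi> j a) (y j)) = (\<Sum>j<m. smultv (\<chi> j (a*b)) (x j)) - smultv (\<chi> k1 b) (\<Sum>j<m. smultv (\<chi> j a) (x j))"
            by (simp add: y_def fun_eq_iff sum_fun_apply mult sum_distrib_left sum_subtractf algebra_simps)
          show ?thesis unfolding eq by (rule V.span_diff[OF less.prems(2) V.span_scale[OF less.prems(2)]])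
        qed
        have "\<forall>j<m. y j \<in> V.span S" by (rule less.IH[OF lt refl hy])
        hence "y k \<in> V.span S" using km by blast
        hence "smultv (inverse (\<chi> k b - \<chi> k1 b)) (y k) \<in> V.span S" by (rule V.span_scale)
        thus ?thesis using b by (simp add: y_def smultv_comp)
      qed
      have "(\<Sum>j<m. smultv (\<chi> j 1) (x j)) \<in> V.span S" by (rule less.prems(2))
      hence s: "(\<Sum>j<m. x j) \<in> V.span S" by (simp add: one)
      have "(\<Sum>j<m. x j) = x k1 + (\<Sum>j\<in>{..<m}-{k1}. x j)" using k1 by (simp add: sum.remove)
      moreover have "(\<Sum>j\<in>{..<m}-{k1}. x j) \<in> V.span S" using others by (intro V.span_sum) auto
      ultimately have "x k1 \<in> V.span S" using s V.span_add_eq2 by metis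
      thus False using k1 by blast
    qed
  qed
  show ?thesis by (rule main[OF refl hyp])
qed


context ff
begin

lemma fixed_basis:
  assumes h: "semi k0 (h :: ('n::finite \<Rightarrow> 'a) \<Rightarrow> _)" and km: "k0 * m = f" and k0: "k0 > 0" and hm: "h ^^ m = id"
  shows "\<exists>w::'n \<Rightarrow> ('n \<Rightarrow> 'a). (\<forall>i. h (w i) = w i) \<and> bij (lincomb w)"
proof -
  define W where "W = {v. h v = v}"
  have m0: "m > 0" using km f1 by (cases m) auto
  define \<chi> where "\<chi> k a = (a::'a)^(p^(k0*k))" for k a
  have hk: "(h^^k) (smultv a v) = smultv (\<chi> k a) ((h^^k) v)" for k a v
    using semiD(2)[OF semi_pow[OF h, of k]] by (simp add: \<chi>_def)
  have T: "(\<Sum>k<m. (h^^k) (smultv a v)) \<in> W" for a v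
  proof -
    define F where "F k = (h^^k) (smultv a v)" for k
    have "h (\<Sum>k<m. F k) = (\<Sum>k<m. h (F k))" by (rule semi_sum[OF h])
    also have "\<dots> = (\<Sum>k<m. F (Suc k))" by (simp add: F_def)
    also have "\<dots> = (\<Sum>k<m. F k)"
    proof -
      obtain m' where m': "m = Suc m'" using m0 by (cases m) auto
      have Fm: "F (Suc m') = F 0" using hm m' by (simp add: F_def)
      have "(\<Sum>k<Suc m'. F (Suc k)) = (\<Sum>k<m'. F (Suc k)) + F (Suc m')" by (rule sum.lessThan_Suc)
      also have "\<dots> = F 0 + (\<Sum>k<m'. F (Suc k))" using Fm by (simp add: add.commute)
      also have "\<dots> = (\<Sum>k<Suc m'. F k)" by (rule sum.lessThan_Suc_shift[symmetric])
      finally show ?thesis unfolding m' .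
    qed
    finally show ?thesis by (simp add: W_def F_def)
  qed
  have span_all: "v \<in> V.span W" for v
  proof -
    have "\<forall>k<m. (h^^k) v \<in> V.span W"
    proof (rule dedekind[where \<chi>=\<chi>])
      show "\<chi> k (a * b) = \<chi> k a * \<chi> k b" for k a b by (simp add: \<chi>_def power_mult_distrib)
      show "\<chi> k 1 = 1" for k by (simp add: \<chi>_def)
      show "\<exists>b. \<chi> k b \<noteq> \<chi> l b" if "k < m" "l < m" "k \<noteq> l" for k l
      proof (rule ccontr)
        assume "\<not> (\<exists>b. \<chi> k b \<noteq> \<chi> l b)"
        hence "\<And>x::'a. x^(p^(k0*k)) = x^(p^(k0*l))" by (simp add: \<chi>_def)
        moreover have "k0*k < f" "k0*l < f" using that k0 km by auto
        ultimately have "k0*k = k0*l" using frob_exp_inj by blast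
        thus False using k0 that by simp
      qed
      show "(\<Sum>k<m. smultv (\<chi> k a) ((h ^^ k) v)) \<in> V.span W" for a
        using T[of a v] hk V.span_base by (metis (no_types, lifting) sum.cong)
    qed
    from this[rule_format, of 0] m0 show ?thesis by simp
  qed
  obtain B where B: "B \<subseteq> W" "V.independent B" "W \<subseteq> V.span B" using V.maximal_independent_subset by blast
  define e where "e i = (\<lambda>j. if j = i then 1 else 0 :: 'a)" for i :: 'n
  have "v \<in> V.span (range e)" for v
  proof -
    have "v = lincomb e v" unfolding e_def by (rule std_span)
    also have "\<dots> \<in> V.span (range e)" unfolding lincomb_def
      by (intro V.span_sum V.span_scale V.span_base) auto
    finally show ?thesis .
  qed
  hence "finite B \<and> card B \<le> card (range e)" using B by (intro V.independent_span_bound) auto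
  moreover have "card (range e) \<le> card (UNIV::'n set)" by (rule card_image_le) simp
  ultimately have finB: "finite B" and cB: "card B \<le> card (UNIV::'n set)" by auto
  obtain g :: "_ \<Rightarrow> 'n" where g: "inj_on g B" using card_le_inj[OF finB finite_UNIV cB] by blast
  define w where "w i = (if i \<in> g ` B then the_inv_into B g i else 0)" for i
  have wB: "w (g b) = b" if "b \<in> B" for b using that g by (simp add: w_def the_inv_into_f_f)
  have wW: "h (w i) = w i" for i
  proof (cases "i \<in> g ` B")
    case True
    hence "the_inv_into B g i \<in> B" using g by (auto intro: the_inv_into_into)
    thus ?thesis using True B(1) by (simp add: w_def W_def subset_iff)
  next
    case False thus ?thesis using semi_zero[OF h] by (simp add: w_def)
  qed
  have Brw: "B \<subseteq> range w" using wB by (metis image_subset_iff rangeI subsetI)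
  have sub: "V.subspace (range (lincomb w))"
    unfolding V.subspace_def
  proof (intro conjI ballI allI)
    show "0 \<in> range (lincomb w)" using lincomb_zero[of w] by (metis rangeI)
  next
    fix x y assume "x \<in> range (lincomb w)" "y \<in> range (lincomb w)"
    then obtain l l' where "x = lincomb w l" "y = lincomb w l'" by blast
    thus "x + y \<in> range (lincomb w)" using lincomb_add[of w l l'] by (metis rangeI)
  next
    fix c x assume "x \<in> range (lincomb w)"
    then obtain l where "x = lincomb w l" by blast
    thus "smultv c x \<in> range (lincomb w)" using lincomb_scale[of w c l] by (metis rangeI)
  qed
  have "range w \<subseteq> range (lincomb w)" using lincomb_unit[of w] by (metis image_subset_iff rangeI)
  hence s1: "V.span (range w) \<subseteq> range (lincomb w)" by (rule V.span_minimal[OF _ sub])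
  have s2: "V.span B \<subseteq> V.span (range w)" by (rule V.span_mono[OF Brw])
  have s3: "V.span W \<subseteq> V.span B" by (rule V.span_minimal[OF B(3) V.subspace_span])
  have "surj (lincomb w)" using span_all s1 s2 s3 by blast
  hence "bij (lincomb w)" using finite_UNIV_surj_inj[OF finite_V[OF fin]] by (simp add: bij_def)
  thus ?thesis using wW by blast
qed

end


lemma geom_nat:
  assumes r: "(r::nat) \<ge> 1"
  shows "(r - 1) * (\<Sum>k<m. r^k) = r^m - 1"
proof -
  have e1: "int (r - 1) = int r - 1" using r by linarith
  have e2: "int (\<Sum>k<m. r^k) = (\<Sum>k<m. int r ^ k)" by (simp only: of_nat_sum of_nat_power)
  have rm: "r^m \<ge> 1" using r by (rule one_le_power)
  have e3: "int (r^m - 1) = int r ^ m - 1" using rm by (simp only: of_nat_diff of_nat_power of_nat_1)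
  have "int ((r - 1) * (\<Sum>k<m. r^k)) = (int r - 1) * (\<Sum>k<m. int r ^ k)"
    by (simp only: of_nat_mult e1 e2)
  also have "\<dots> = int r ^ m - 1" by (rule power_diff_1_eq[symmetric])
  also have "\<dots> = int (r^m - 1)" by (rule e3[symmetric])
  finally show ?thesis by (simp only: of_nat_eq_iff)
qed

context ff
begin

lemma norm_surj:
  assumes km: "k0 * m = f" and lam: "(lam::'a) \<noteq> 0" "lam^(p^k0) = lam"
  shows "\<exists>\<nu>. \<nu> \<noteq> 0 \<and> \<nu>^(\<Sum>k<m. (p^k0)^k) = lam"
proof -
  obtain w :: 'a where w: "w \<noteq> 0" "\<forall>x. x \<noteq> 0 \<longrightarrow> (\<exists>i. x = w^i)" using generator by blast
  obtain a where a: "lam = w^a" using w lam by blast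
  define r where "r = p^k0"
  define s where "s = (\<Sum>k<m. r^k)"
  have k0: "k0 \<ge> 1" using km f1 by (cases k0) auto
  have "p^1 \<le> p^k0" using k0 p_gt1 by (intro power_increasing) auto
  hence r2: "r \<ge> 2" using p_gt1 unfolding r_def by simp
  have "lam * lam^(r-1) = lam^(Suc (r-1))" by simp
  also have "Suc (r-1) = r" using r2 by simp
  also have "lam^r = lam" using lam(2) r_def by simp
  finally have "lam * lam^(r-1) = lam * 1" by simp
  hence "lam^(r-1) = 1" using lam(1) by simp
  hence "w^(a*(r-1)) = 1" by (simp add: a power_mult)
  hence d: "(card (UNIV::'a set) - 1) dvd a*(r-1)" by (rule ord_gen[OF w])
  have "card (UNIV::'a set) = p^(k0*m)" using card km by simp
  hence "card (UNIV::'a set) = r^m" by (simp add: r_def power_mult)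
  hence "card (UNIV::'a set) - 1 = (r - 1) * s" using geom_nat[of r m] r2 by (simp add: s_def)
  hence "(r-1) * s dvd (r-1) * a" using d by (simp add: mult.commute)
  hence "s dvd a" using r2 by (simp add: nat_mult_dvd_cancel1)
  then obtain a' where a': "a = s * a'" by blast
  have "(w^a')^s = lam" by (simp add: a a' power_mult[symmetric] mult.commute)
  moreover have "w^a' \<noteq> 0" using w by simp
  ultimately show ?thesis unfolding s_def r_def by blast
qed

lemma L_facts:
  assumes "is_basis (\<beta> :: 'n::finite \<Rightarrow> 'n \<Rightarrow> 'a)"
  shows "inv (lincomb \<beta>) (lincomb \<beta> l) = l" "lincomb \<beta> (inv (lincomb \<beta>) v) = v" "bij (lincomb \<beta>)"
  using assms by (auto simp: is_basis_def bij_is_inj bij_is_surj inv_f_f surj_f_inv_f)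

lemma phi_pow_L:
  assumes "is_basis (\<beta> :: 'n::finite \<Rightarrow> 'n \<Rightarrow> 'a)"
  shows "(phi_basis p \<beta> ^^ e) (lincomb \<beta> l) = lincomb \<beta> (\<lambda>i. (l i)^(p^e))"
proof (induction e)
  case 0 thus ?case by simp
next
  case (Suc e)
  have "(phi_basis p \<beta> ^^ Suc e) (lincomb \<beta> l) = phi_basis p \<beta> (lincomb \<beta> (\<lambda>i. (l i)^(p^e)))"
    using Suc by simp
  also have "\<dots> = lincomb \<beta> (\<lambda>i. ((l i)^(p^e))^p)"
    by (simp add: phi_basis_def L_facts[OF assms])
  also have "\<dots> = lincomb \<beta> (\<lambda>i. (l i)^(p^Suc e))"
    by (simp add: power_mult[symmetric] mult.commute)
  finally show ?case .
qed

lemma phi_pow_mod: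
  assumes "is_basis (\<beta> :: 'n::finite \<Rightarrow> 'n \<Rightarrow> 'a)" "a mod f = b mod f"
  shows "phi_basis p \<beta> ^^ a = phi_basis p \<beta> ^^ b"
proof
  fix v
  have "v = lincomb \<beta> (inv (lincomb \<beta>) v)" using L_facts[OF assms(1)] by simp
  then obtain l where v: "v = lincomb \<beta> l" by blast
  have fx: "x^(p^a) = x^(p^b)" for x :: 'a using frob_mod[of x a] frob_mod[of x b] assms(2) by simp
  have "(\<lambda>i. (l i)^(p^a)) = (\<lambda>i. (l i)^(p^b))" by (rule ext) (rule fx)
  thus "(phi_basis p \<beta> ^^ a) v = (phi_basis p \<beta> ^^ b) v"
    unfolding v phi_pow_L[OF assms(1)] by simp
qed

lemma phi_semi:
  assumes "is_basis (\<beta> :: 'n::finite \<Rightarrow> 'n \<Rightarrow> 'a)"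
  shows "semi e (phi_basis p \<beta> ^^ e)"
  unfolding semi_def
proof safe
  fix u v
  obtain l l' where u: "u = lincomb \<beta> l" and v: "v = lincomb \<beta> l'" using L_facts(2)[OF assms, symmetric] by blast
  have e1: "u + v = lincomb \<beta> (l + l')" unfolding u v by (rule lincomb_add[symmetric])
  have e2: "(\<lambda>i. ((l + l') i)^(p^e)) = (\<lambda>i. (l i)^(p^e)) + (\<lambda>i. (l' i)^(p^e))"
    by (simp add: fun_eq_iff frob_add)
  have "(phi_basis p \<beta> ^^ e) (u + v) = (phi_basis p \<beta> ^^ e) (lincomb \<beta> (l + l'))" by (simp only: e1)
  also have "\<dots> = lincomb \<beta> (\<lambda>i. ((l + l') i)^(p^e))" by (rule phi_pow_L[OF assms])
  also have "\<dots> = lincomb \<beta> ((\<lambda>i. (l i)^(p^e)) + (\<lambda>i. (l' i)^(p^e)))" by (simp only: e2)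
  also have "\<dots> = lincomb \<beta> (\<lambda>i. (l i)^(p^e)) + lincomb \<beta> (\<lambda>i. (l' i)^(p^e))" by (rule lincomb_add)
  also have "\<dots> = (phi_basis p \<beta> ^^ e) u + (phi_basis p \<beta> ^^ e) v" unfolding u v phi_pow_L[OF assms] ..
  finally show "(phi_basis p \<beta> ^^ e) (u + v) = (phi_basis p \<beta> ^^ e) u + (phi_basis p \<beta> ^^ e) v" .
next
  fix c :: 'a and u
  obtain l where u: "u = lincomb \<beta> l" using L_facts(2)[OF assms, symmetric] by blast
  have e1: "smultv c u = lincomb \<beta> (\<lambda>i. c * l i)" unfolding u by (rule lincomb_scale[symmetric])
  have e2: "(\<lambda>i. (c * l i)^(p^e)) = (\<lambda>i. c^(p^e) * (l i)^(p^e))" by (simp add: power_mult_distrib)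
  have "(phi_basis p \<beta> ^^ e) (smultv c u) = (phi_basis p \<beta> ^^ e) (lincomb \<beta> (\<lambda>i. c * l i))" by (simp only: e1)
  also have "\<dots> = lincomb \<beta> (\<lambda>i. (c * l i)^(p^e))" by (rule phi_pow_L[OF assms])
  also have "\<dots> = lincomb \<beta> (\<lambda>i. c^(p^e) * (l i)^(p^e))" by (simp only: e2)
  also have "\<dots> = smultv (c^(p^e)) (lincomb \<beta> (\<lambda>i. (l i)^(p^e)))" by (rule lincomb_scale)
  also have "\<dots> = smultv (c^(p^e)) ((phi_basis p \<beta> ^^ e) u)" unfolding u phi_pow_L[OF assms] ..
  finally show "(phi_basis p \<beta> ^^ e) (smultv c u) = smultv (c ^ p ^ e) ((phi_basis p \<beta> ^^ e) u)" .
qed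

lemma phi_bij:
  assumes "is_basis (\<beta> :: 'n::finite \<Rightarrow> 'n \<Rightarrow> 'a)"
  shows "bij (phi_basis p \<beta> ^^ e)"
proof -
  have "(phi_basis p \<beta> ^^ (f*e - e)) \<circ> (phi_basis p \<beta> ^^ e) = phi_basis p \<beta> ^^ (f*e - e + e)"
    by (simp add: funpow_add)
  also have "\<dots> = phi_basis p \<beta> ^^ 0"
    by (rule phi_pow_mod[OF assms]) (use f1 in \<open>simp add: le_add_diff_inverse2\<close>)
  finally have 1: "(phi_basis p \<beta> ^^ (f*e - e)) \<circ> (phi_basis p \<beta> ^^ e) = id" by simp
  have "(phi_basis p \<beta> ^^ e) \<circ> (phi_basis p \<beta> ^^ (f*e - e)) = phi_basis p \<beta> ^^ (e + (f*e - e))"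
    by (simp add: funpow_add)
  also have "\<dots> = phi_basis p \<beta> ^^ 0"
    by (rule phi_pow_mod[OF assms]) (use f1 in \<open>simp add: le_add_diff_inverse\<close>)
  finally have 2: "(phi_basis p \<beta> ^^ e) \<circ> (phi_basis p \<beta> ^^ (f*e - e)) = id" by simp
  show ?thesis using 1 2 by (rule o_bij)
qed

end


lemma lincomb_smultv: "lincomb w (smultv c l) = smultv c (lincomb w l)"
proof -
  have "smultv c l = (\<lambda>i. c * l i)" by (rule ext) simp
  thus ?thesis by (simp only: lincomb_scale)
qed

lemma lincomb_semi0: "(\<forall>u v. lincomb w (u + v) = lincomb w u + lincomb w v) \<and>
   (\<forall>c v. lincomb w (smultv c v) = smultv (c^(p^0)) (lincomb w v))"
  by (simp add: lincomb_add lincomb_smultv)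

context ff
begin

lemma core:
  assumes \<beta>: "is_basis (\<beta> :: 'n::finite \<Rightarrow> 'n \<Rightarrow> 'a)" and h: "semi k0 h0" "bij h0"
    and km: "k0 * m = f" and k0: "k0 > 0"
    and hm: "h0 ^^ m = smultv lam" and lam: "lam \<noteq> 0"
  shows "\<exists>b\<in>GL. \<exists>d. d \<noteq> 0 \<and> inv b \<circ> h0 \<circ> b = smultv d \<circ> (phi_basis p \<beta> ^^ k0)"
proof -
  define r where "r = p^k0"
  define L where "L = lincomb \<beta>"
  have lamr: "lam^r = lam"
  proof -
    obtain v where v: "h0 v \<noteq> 0" using bij_nonzero[OF h(2)] by blast
    have "h0 ((h0^^m) v) = (h0^^m) (h0 v)" by (rule funpow_swap1)
    hence "smultv (lam^r) (h0 v) = smultv lam (h0 v)" using semiD(2)[OF h(1)] hm by (simp add: r_def)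
    thus ?thesis using smultv_cancel v by blast
  qed
  define il where "il = inverse lam"
  have il: "il \<noteq> 0" "il^(p^k0) = il" using lam lamr by (auto simp: il_def r_def power_inverse)
  obtain \<nu> where nu: "\<nu> \<noteq> 0" "\<nu>^(\<Sum>k<m. r^k) = il" using norm_surj[OF km il] unfolding r_def by blast
  define h' where "h' = smultv \<nu> \<circ> h0"
  have h'semi: "semi k0 h'"
    unfolding semi_def h'_def using semiD[OF h(1)] by (simp add: smultv_add smultv_comp mult.commute)
  have pw: "h' ^^ t = smultv (\<Prod>k<t. \<nu>^(r^k)) \<circ> (h0 ^^ t)" for t
  proof (induction t)
    case 0 show ?case by (simp add: fun_eq_iff)
  next
    case (Suc t)
    have "h' ^^ Suc t = h' \<circ> (h' ^^ t)" by simp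
    also have "\<dots> = h' \<circ> (smultv (\<Prod>k<t. \<nu>^(r^k)) \<circ> (h0 ^^ t))" by (simp only: Suc.IH)
    also have "\<dots> = smultv (\<nu> * (\<Prod>k<t. \<nu>^(r^k))^r) \<circ> (h0 ^^ Suc t)"
      unfolding h'_def using semiD(2)[OF h(1)] by (simp add: fun_eq_iff r_def smultv_comp)
    also have "\<nu> * (\<Prod>k<t. \<nu>^(r^k))^r = (\<Prod>k<Suc t. \<nu>^(r^k))"
      by (simp only: prod.lessThan_Suc_shift) (simp add: prod_power_distrib power_mult[symmetric] mult.commute)
    finally show ?case .
  qed
  have "h' ^^ m = id"
  proof -
    have "(\<Prod>k<m. \<nu>^(r^k)) = il" using nu(2) by (simp add: power_sum)
    hence "h' ^^ m = smultv il \<circ> smultv lam" using pw[of m] hm by simp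
    thus ?thesis using lam by (simp add: fun_eq_iff il_def)
  qed
  from fixed_basis[OF h'semi km k0 this]
  obtain w where w: "\<forall>i. h' (w i) = w i" "bij (lincomb w)" by blast
  have LL: "bij L" "\<And>l. inv L (L l) = l" "\<And>v. L (inv L v) = v" using L_facts[OF \<beta>] by (auto simp: L_def)
  have Lsemi: "semi 0 L" unfolding semi_def L_def by (rule lincomb_semi0)
  have iLsemi: "semi 0 (inv L)" using semi_inv[OF Lsemi LL(1)] by simp
  have wsemi: "semi 0 (lincomb w)" unfolding semi_def by (rule lincomb_semi0)
  define b where "b = lincomb w \<circ> inv L"
  have bsemi: "semi 0 b" unfolding b_def using semi_comp[OF wsemi iLsemi] by simp
  have bbij: "bij b" unfolding b_def using w(2) LL(1) by (intro bij_comp bij_imp_bij_inv) auto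
  have bGL: "b \<in> GL" using bsemi bbij by (simp add: GL_iff)
  have conj: "h' \<circ> b = b \<circ> (phi_basis p \<beta> ^^ k0)"
  proof
    fix u
    define l where "l = inv L u"
    have u: "u = L l" using LL(3) l_def by simp
    have "b ((phi_basis p \<beta> ^^ k0) u) = lincomb w (\<lambda>i. (l i)^r)"
      unfolding u b_def L_def using phi_pow_L[OF \<beta>] LL(2) by (simp add: L_def r_def)
    moreover have "h' (b u) = lincomb w (\<lambda>i. (l i)^r)"
    proof -
      have "h' (b u) = h' (lincomb w l)" unfolding b_def u using LL(2) by simp
      also have "\<dots> = (\<Sum>i\<in>UNIV. h' (smultv (l i) (w i)))" unfolding lincomb_def by (rule semi_sum[OF h'semi])
      also have "\<dots> = (\<Sum>i\<in>UNIV. smultv ((l i)^r) (w i))" using semiD(2)[OF h'semi] w(1) by (simp add: r_def)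
      finally show ?thesis by (simp add: lincomb_def)
    qed
    ultimately show "(h' \<circ> b) u = (b \<circ> (phi_basis p \<beta> ^^ k0)) u" by simp
  qed
  have ibGL: "inv b \<in> GL" by (rule GL_inv[OF bGL])
  hence ibsemi: "semi 0 (inv b)" by (simp add: GL_iff)
  have "inv b \<circ> h' \<circ> b = inv b \<circ> (h' \<circ> b)" by (simp add: comp_assoc)
  also have "\<dots> = inv b \<circ> (b \<circ> (phi_basis p \<beta> ^^ k0))" using conj by simp
  also have "\<dots> = (inv b \<circ> b) \<circ> (phi_basis p \<beta> ^^ k0)" by (simp add: comp_assoc)
  also have "\<dots> = phi_basis p \<beta> ^^ k0" using bbij by (simp add: bij_is_inj)
  finally have "inv b \<circ> h' \<circ> b = phi_basis p \<beta> ^^ k0" .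
  note X = this
  have h0e: "h0 = smultv (inverse \<nu>) \<circ> h'" using nu(1) by (simp add: h'_def fun_eq_iff smultv_comp)
  have cm: "inv b \<circ> smultv (inverse \<nu>) = smultv (inverse \<nu>) \<circ> inv b"
    using semi_comm_scalar[OF ibsemi] by simp
  have "inv b \<circ> h0 \<circ> b = (inv b \<circ> smultv (inverse \<nu>)) \<circ> h' \<circ> b" unfolding h0e by (simp add: comp_assoc)
  also have "\<dots> = smultv (inverse \<nu>) \<circ> (inv b \<circ> h' \<circ> b)" unfolding cm by (simp add: comp_assoc)
  finally have "inv b \<circ> h0 \<circ> b = smultv (inverse \<nu>) \<circ> (phi_basis p \<beta> ^^ k0)" unfolding X .
  moreover have "inverse \<nu> \<noteq> 0" using nu(1) by simp
  ultimately show ?thesis using bGL by blast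
qed

end


lemma conj_pow:
  assumes "bij b"
  shows "inv b \<circ> x^^t \<circ> b = (inv b \<circ> x \<circ> b)^^t"
proof (induction t)
  case 0 show ?case using assms by (simp add: bij_is_inj)
next
  case (Suc t)
  have bb: "b \<circ> inv b = id" using surj_iff[of b] bij_is_surj[OF assms] by blast
  have "inv b \<circ> x^^Suc t \<circ> b = inv b \<circ> x \<circ> (b \<circ> inv b) \<circ> x^^t \<circ> b" by (simp add: bb comp_assoc)
  also have "\<dots> = (inv b \<circ> x \<circ> b) \<circ> (inv b \<circ> x^^t \<circ> b)" by (simp add: comp_assoc)
  also have "\<dots> = (inv b \<circ> x \<circ> b)^^Suc t" by (simp only: Suc funpow.simps(2))
  finally show ?case .
qed

context ff
begin

lemma mixed:
  assumes "is_basis (\<beta> :: 'n::finite \<Rightarrow> 'n \<Rightarrow> 'a)"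
  shows "smultv d \<circ> (phi_basis p \<beta> ^^ j) \<circ> smultv c = smultv (d * c^(p^j)) \<circ> (phi_basis p \<beta> ^^ j)"
proof -
  have "(phi_basis p \<beta> ^^ j) \<circ> smultv c = smultv (c^(p^j)) \<circ> (phi_basis p \<beta> ^^ j)"
    by (rule semi_comm_scalar[OF phi_semi[OF assms]])
  hence "smultv d \<circ> (phi_basis p \<beta> ^^ j) \<circ> smultv c = smultv d \<circ> (smultv (c^(p^j)) \<circ> (phi_basis p \<beta> ^^ j))"
    by (simp add: comp_assoc)
  thus ?thesis by (simp add: fun_eq_iff smultv_comp)
qed

lemma closure_pow:
  assumes "is_basis (\<beta> :: 'n::finite \<Rightarrow> 'n \<Rightarrow> 'a)" "d \<noteq> 0"
  shows "\<exists>d'. d' \<noteq> 0 \<and> (smultv d \<circ> (phi_basis p \<beta> ^^ k))^^t = smultv d' \<circ> (phi_basis p \<beta> ^^ (k*t))"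
proof (induction t)
  case 0 show ?case by (intro exI[of _ 1]) (simp add: fun_eq_iff)
next
  case (Suc t)
  then obtain d' where d': "d' \<noteq> 0" "(smultv d \<circ> (phi_basis p \<beta> ^^ k))^^t = smultv d' \<circ> (phi_basis p \<beta> ^^ (k*t))"
    by blast
  have "(smultv d \<circ> (phi_basis p \<beta> ^^ k))^^Suc t = (smultv d \<circ> (phi_basis p \<beta> ^^ k) \<circ> smultv d') \<circ> (phi_basis p \<beta> ^^ (k*t))"
    by (simp add: d'(2) comp_assoc)
  also have "\<dots> = smultv (d * d'^(p^k)) \<circ> (phi_basis p \<beta> ^^ k) \<circ> (phi_basis p \<beta> ^^ (k*t))"
    by (simp only: mixed[OF assms(1)])
  also have "\<dots> = smultv (d * d'^(p^k)) \<circ> (phi_basis p \<beta> ^^ (k * Suc t))"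
    by (simp add: comp_assoc funpow_add)
  finally have X: "(smultv d \<circ> (phi_basis p \<beta> ^^ k))^^Suc t = smultv (d * d'^(p^k)) \<circ> (phi_basis p \<beta> ^^ (k * Suc t))" .
  have "d * d'^(p^k) \<noteq> 0" using assms(2) d'(1) by simp
  thus ?case using X by blast
qed

lemma conv:
  assumes "is_basis (\<beta> :: 'n::finite \<Rightarrow> 'n \<Rightarrow> 'a)" "d \<noteq> 0"
  shows "\<exists>i\<in>{1..f}. \<exists>g\<in>scalars. smultv d \<circ> (phi_basis p \<beta> ^^ j) = (phi_basis p \<beta> ^^ i) \<circ> g"
proof -
  obtain c where c: "c^(p^j) = d" using frob_surj by blast
  have c0: "c \<noteq> 0" using c assms(2) p_gt1 by auto
  have e: "(phi_basis p \<beta> ^^ j) \<circ> smultv c = smultv d \<circ> (phi_basis p \<beta> ^^ j)"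
    using semi_comm_scalar[OF phi_semi[OF assms(1)]] c by simp
  define i where "i = (if j mod f = 0 then f else j mod f)"
  have i: "i \<in> {1..f}" using f1 by (auto simp: i_def)
  have "i mod f = j mod f" by (simp add: i_def)
  hence "phi_basis p \<beta> ^^ i = phi_basis p \<beta> ^^ j" by (rule phi_pow_mod[OF assms(1)])
  moreover have "smultv c \<in> (scalars :: (('n \<Rightarrow> 'a) \<Rightarrow> _) set)" using c0 by (auto simp: scalars_def)
  ultimately have "smultv d \<circ> (phi_basis p \<beta> ^^ j) = (phi_basis p \<beta> ^^ i) \<circ> smultv c" using e by simp
  thus ?thesis using i \<open>smultv c \<in> scalars\<close> by blast
qed

end

theorem mainTheorem12:
  fixes H :: "(('n::finite \<Rightarrow> 'a::field) \<Rightarrow> ('n \<Rightarrow> 'a)) set"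
    and \<beta> :: "'n \<Rightarrow> 'n \<Rightarrow> 'a"
    and p f :: nat
  assumes "finite (UNIV :: 'a set)"
    and "prime p" and "f \<ge> 1" and "card (UNIV :: 'a set) = p ^ f"
    and "card (UNIV :: 'n set) \<ge> 2"
    and "\<not> (card (UNIV :: 'n set) = 2 \<and> (card (UNIV :: 'a set) = 2 \<or> card (UNIV :: 'a set) = 3))"
    and "is_basis \<beta>"
    and "subgroup_GammaL H"
    and "H \<inter> GL \<subseteq> scalars"
  shows "\<exists>b\<in>GL. \<forall>h\<in>H. \<exists>i\<in>{1..f}. \<exists>g\<in>scalars.
           inv b \<circ> h \<circ> b = (phi_basis p \<beta> ^^ i) \<circ> g"
proof -
  interpret ff p f "TYPE('a)" by unfold_locales (use assms in auto)
  note \<beta> = assms(7)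
  have HG: "H \<subseteq> GammaL" "id \<in> H" "\<And>g h. g \<in> H \<Longrightarrow> h \<in> H \<Longrightarrow> g \<circ> h \<in> H" "\<And>g. g \<in> H \<Longrightarrow> inv g \<in> H"
    using assms(8) by (auto simp: subgroup_GammaL_def)
  have Hsemi: "bij h \<and> (\<exists>e<f. semi e h)" if "h \<in> H" for h using GammaL_semi HG(1) that by blast
  have scal: "\<exists>c. c \<noteq> 0 \<and> g = smultv c" if "g \<in> H" "semi 0 g" for g
  proof -
    have "g \<in> GL" using Hsemi[OF that(1)] that(2) by (simp add: GL_iff)
    hence "g \<in> scalars" using assms(9) that(1) by blast
    thus ?thesis by (auto simp: scalars_def)
  qed
  have powH: "g^^t \<in> H" if gH: "g \<in> H" for g t
  proof (induction t)
    case 0 show ?case using HG(2) by (simp only: funpow.simps(1))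
  next
    case (Suc t)
    have "g \<circ> g^^t \<in> H" by (rule HG(3)[OF gH Suc])
    thus ?case by (simp only: funpow.simps(2))
  qed
  show ?thesis
  proof (cases "\<forall>h\<in>H. semi 0 h")
    case True
    have "id \<in> (GL :: (('n \<Rightarrow> 'a) \<Rightarrow> _) set)" unfolding GL_iff using semi_id bij_id by blast
    moreover have "\<exists>i\<in>{1..f}. \<exists>g\<in>scalars. inv id \<circ> h \<circ> id = (phi_basis p \<beta> ^^ i) \<circ> g" if "h \<in> H" for h
    proof -
      have "semi 0 h" using True that by blast
      from scal[OF that this] obtain c where c: "c \<noteq> 0" "h = smultv c" by blast
      have eq: "inv id \<circ> h \<circ> id = smultv c \<circ> (phi_basis p \<beta> ^^ 0)" using c by (simp add: inv_id)
      show ?thesis unfolding eq by (rule conv[OF \<beta> c(1)])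
    qed
    ultimately show ?thesis by (intro bexI[of _ id]) auto
  next
    case False
    define P where "P e \<longleftrightarrow> 0 < e \<and> e < f \<and> (\<exists>h\<in>H. semi e h)" for e
    obtain h1 where h1: "h1 \<in> H" "\<not> semi 0 h1" using False by blast
    obtain e1 where "e1 < f" "semi e1 h1" using Hsemi[OF h1(1)] by blast
    hence "P e1" using h1 by (cases e1) (auto simp: P_def)
    define k0 where "k0 = (LEAST e. P e)"
    have Pk0: "P k0" unfolding k0_def using \<open>P e1\<close> by (rule LeastI)
    have kmin: "k0 \<le> e" if "P e" for e unfolding k0_def using that by (rule Least_le)
    obtain h0 where h0: "h0 \<in> H" "semi k0 h0" using Pk0 by (auto simp: P_def)
    have k0: "0 < k0" "k0 < f" using Pk0 by (auto simp: P_def)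
    have red: "r = 0" if "g \<in> H" "semi e g" "e = f*x + r" "r < k0" for g e x r
    proof (rule ccontr)
      assume "r \<noteq> 0"
      have "semi r g" by (rule semi_red[OF that(2,3)])
      hence "P r" using \<open>r \<noteq> 0\<close> that(1,4) k0 by (auto simp: P_def)
      thus False using kmin that(4) by fastforce
    qed
    have invpow: "inv (h0^^t) \<in> H \<and> semi (f*(k0*t) - k0*t) (inv (h0^^t)) \<and> bij (h0^^t)" for t
    proof -
      have hin: "h0^^t \<in> H" by (rule powH[OF h0(1)])
      have sp: "semi (k0*t) (h0^^t)" by (rule semi_pow[OF h0(2)])
      have bj: "bij (h0^^t)" using Hsemi[OF hin] by (rule conjunct1)
      have A: "inv (h0^^t) \<in> H" by (rule HG(4)[OF hin])
      have B: "semi (f*(k0*t) - k0*t) (inv (h0^^t))" by (rule semi_inv[OF sp bj])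
      show ?thesis using A B bj by (intro conjI)
    qed
    define m where "m = f div k0"
    have fm: "f = k0 * m + f mod k0" by (simp add: m_def)
    have "0 < f div k0" using k0 by (simp add: div_greater_zero_iff)
    hence m1: "m \<ge> 1" by (simp add: m_def)
    have "f mod k0 = 0"
    proof (rule red)
      show "inv (h0^^m) \<in> H" using invpow[of m] by (rule conjunct1)
      show "semi (f*(k0*m) - k0*m) (inv (h0^^m))" using invpow[of m] by (elim conjE)
      show "f mod k0 < k0" using k0 by simp
      have K: "k0*m \<ge> 1" using k0 m1 by simp
      show "f*(k0*m) - k0*m = f * (k0*m - 1) + f mod k0"
      proof -
        obtain K' where K': "k0*m = Suc K'" using K by (cases "k0*m") auto
        show ?thesis unfolding K' using fm K' by (simp add: algebra_simps)
      qed
    qed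
    hence km: "k0 * m = f" using fm by simp
    have "semi (k0*m) (h0^^m)" by (rule semi_pow[OF h0(2)])
    moreover have "k0*m = f*1 + 0" using km by simp
    ultimately have "semi 0 (h0^^m)" by (rule semi_red)
    from scal[OF powH[OF h0(1)] this] obtain lam where lam: "lam \<noteq> 0" "h0^^m = smultv lam" by blast
    obtain b d where b: "b \<in> GL" "d \<noteq> 0" "inv b \<circ> h0 \<circ> b = smultv d \<circ> (phi_basis p \<beta> ^^ k0)"
      using core[OF \<beta> h0(2) conjunct1[OF Hsemi[OF h0(1)]] km k0(1) lam(2) lam(1)] by blast
    have bb: "bij b" "semi 0 b" using b(1) by (auto simp: GL_iff)
    have "\<exists>i\<in>{1..f}. \<exists>g\<in>scalars. inv b \<circ> h \<circ> b = (phi_basis p \<beta> ^^ i) \<circ> g" if hH: "h \<in> H" for h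
    proof -
      obtain e where e: "e < f" "semi e h" using Hsemi[OF hH] by blast
      define t where "t = e div k0"
      define r where "r = e mod k0"
      have er: "e = k0*t + r" by (simp add: t_def r_def)
      define g where "g = inv (h0^^t) \<circ> h"
      have iv: "inv (h0^^t) \<in> H" "semi (f*(k0*t) - k0*t) (inv (h0^^t))" "bij (h0^^t)"
        using invpow[of t] by auto
      have gH: "g \<in> H" unfolding g_def by (rule HG(3)[OF iv(1) hH])
      have sg: "semi (f*(k0*t) - k0*t + e) g" unfolding g_def by (rule semi_comp[OF iv(2) e(2)])
      have eq: "f*(k0*t) - k0*t + e = f*(k0*t) + r"
      proof -
        have "k0*t \<le> f*(k0*t)" using f1 by simp
        thus ?thesis using er by simp
      qed
      have rk: "r < k0" using k0 by (simp add: r_def)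
      have "r = 0" by (rule red[OF gH sg eq rk])
      hence "semi 0 g" using semi_red[OF sg eq] by simp
      then obtain c where c: "c \<noteq> 0" "g = smultv c" using scal gH by blast
      have hd: "h = h0^^t \<circ> smultv c"
      proof -
        have "bij (h0^^t)" using invpow by blast
        hence "h0^^t \<circ> inv (h0^^t) = id" using surj_iff bij_is_surj by blast
        hence "h0^^t \<circ> g = h" by (simp add: g_def comp_assoc[symmetric])
        thus ?thesis using c by simp
      qed
      have bid: "b \<circ> inv b = id" using bb(1) surj_iff bij_is_surj by blast
      have bid2: "b \<circ> (inv b \<circ> X) = X" for X :: "('n \<Rightarrow> 'a) \<Rightarrow> ('n \<Rightarrow> 'a)"
        by (simp only: o_assoc bid id_comp)
      have "inv b \<circ> h \<circ> b = (inv b \<circ> h0^^t \<circ> b) \<circ> (inv b \<circ> smultv c \<circ> b)"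
        unfolding hd by (simp only: comp_assoc bid2)
      also have "inv b \<circ> h0^^t \<circ> b = (smultv d \<circ> (phi_basis p \<beta> ^^ k0))^^t"
        using conj_pow[OF bb(1)] b(3) by simp
      also have "inv b \<circ> smultv c \<circ> b = smultv c"
      proof -
        have "b \<circ> smultv c = smultv c \<circ> b" using semi_comm_scalar[OF bb(2)] by simp
        hence "inv b \<circ> smultv c \<circ> b = inv b \<circ> b \<circ> smultv c" by (simp add: comp_assoc)
        thus ?thesis using bb(1) by (simp add: bij_is_inj)
      qed
      finally have X: "inv b \<circ> h \<circ> b = (smultv d \<circ> (phi_basis p \<beta> ^^ k0))^^t \<circ> smultv c" .
      obtain d' where d': "d' \<noteq> 0" "(smultv d \<circ> (phi_basis p \<beta> ^^ k0))^^t = smultv d' \<circ> (phi_basis p \<beta> ^^ (k0*t))"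
        using closure_pow[OF \<beta> b(2)] by blast
      have eq: "inv b \<circ> h \<circ> b = smultv (d' * c^(p^(k0*t))) \<circ> (phi_basis p \<beta> ^^ (k0*t))"
        unfolding X d'(2) by (rule mixed[OF \<beta>])
      have "d' * c^(p^(k0*t)) \<noteq> 0" using d'(1) c(1) by simp
      show ?thesis unfolding eq by (rule conv[OF \<beta> \<open>d' * c^(p^(k0*t)) \<noteq> 0\<close>])
    qed
    thus ?thesis using b(1) by blast
  qed
qed


end
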